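(* Let $W:\mathcal X\to\mathcal Y$ be a binary-input DMC ($\mathcal X=\{0,1\}$), fix an input distribution and an integer $L\ge 2$, and let $(Q,\Phi)$, with $Q:\mathcal X\to\mathcal Z$ and $\Phi:\mathcal Z\to\mathcal Y$, be an optimizer of $$\min\{I(Q)-I(W):\ W\preccurlyeq Q \text{ via }\Phi,\ |\mathcal Z|\le L\},$$ such that the posterior vectors $\{\mathbf z\}_{z\in\mathcal Z}$ are pairwise distinct. Then $\{\mathbf z\}_{z\in\mathcal Z}\subseteq\{\mathbf y\}_{y\in\mathcal Y}$. Moreover, for $y\in\mathcal Y$ and $z\in\mathcal Z$, $\Phi(y|z)>0$ implies that $z$ is either the letter with the largest $z_0$ among those with $z_0\le y_0$, or the letter with the smallest $z_0$ among those with $z_0\ge y_0$.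
   Context: $\mathcal Y,\mathcal Z$ finite and disjoint from $\mathcal X=\{0,1\}$. $W\preccurlyeq Q$ via $\Phi$ means $W(y|x)=\sum_zQ(z|x)\Phi(y|z)$ for all $x,y$. A fixed input distribution $\pi(x)>0$ induces output probabilities $\pi_y=\sum_x\pi(x)W(y|x)>0$, $\pi_z=\sum_x\pi(x)Q(z|x)>0$, and posterior vectors $\mathbf y=(y_0,y_1)$ with $y_x=\pi(x)W(y|x)/\pi_y$ and $\mathbf z=(z_0,z_1)$ with $z_x=\pi(x)Q(z|x)/\pi_z$. $I(\cdot)$ is input–output mutual information (natural log). *)

theory Defs
  imports Complex_Main
begin

text \<open>Binary input alphabet X = {0,1} rendered as the subset {0,1} of nat.
  A channel from X to an output alphabet A (finite set) is a function
  C :: nat => 'a => real with C x a = C(a|x).\<close>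

definition inX :: "nat set" where "inX = {0, 1}"

definition is_channel :: "(nat \<Rightarrow> 'a \<Rightarrow> real) \<Rightarrow> 'a set \<Rightarrow> bool" where
  "is_channel C A \<longleftrightarrow> finite A \<and>
     (\<forall>x\<in>inX. (\<forall>a\<in>A. C x a \<ge> 0) \<and> (\<Sum>a\<in>A. C x a) = 1)"

text \<open>Phi z y = Phi(y|z), a channel from Z to Y.\<close>
definition is_stoch :: "('b \<Rightarrow> 'a \<Rightarrow> real) \<Rightarrow> 'b set \<Rightarrow> 'a set \<Rightarrow> bool" where
  "is_stoch Phi B A \<longleftrightarrow>
     (\<forall>b\<in>B. (\<forall>a\<in>A. Phi b a \<ge> 0) \<and> (\<Sum>a\<in>A. Phi b a) = 1)"

definition degraded_via ::
  "(nat \<Rightarrow> 'y \<Rightarrow> real) \<Rightarrow> 'y set \<Rightarrow> (nat \<Rightarrow> 'z \<Rightarrow> real) \<Rightarrow> 'z set \<Rightarrow> ('z \<Rightarrow> 'y \<Rightarrow> real) \<Rightarrow> bool"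
  where
  "degraded_via W Y Q Z Phi \<longleftrightarrow> is_stoch Phi Z Y \<and>
     (\<forall>x\<in>inX. \<forall>y\<in>Y. W x y = (\<Sum>z\<in>Z. Q x z * Phi z y))"

definition outp :: "(nat \<Rightarrow> real) \<Rightarrow> (nat \<Rightarrow> 'a \<Rightarrow> real) \<Rightarrow> 'a \<Rightarrow> real" where
  "outp p C a = (\<Sum>x\<in>inX. p x * C x a)"

definition post :: "(nat \<Rightarrow> real) \<Rightarrow> (nat \<Rightarrow> 'a \<Rightarrow> real) \<Rightarrow> 'a \<Rightarrow> nat \<Rightarrow> real" where
  "post p C a x = p x * C x a / outp p C a"

definition mutual_info :: "(nat \<Rightarrow> real) \<Rightarrow> (nat \<Rightarrow> 'a \<Rightarrow> real) \<Rightarrow> 'a set \<Rightarrow> real" where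
  "mutual_info p C A = (\<Sum>x\<in>inX. \<Sum>a\<in>A.
     (if p x * C x a = 0 then 0 else p x * C x a * ln (C x a / outp p C a)))"

end

theory Submission
  imports Defs
begin


definition KL :: "real \<Rightarrow> real \<Rightarrow> real" where
  "KL c x = c*ln c - c*ln x + (1-c)*ln(1-c) - (1-c)*ln(1-x)"

lemma aux0:
  fixes y :: real assumes "0 < y" "y < 1"
  shows "3*y/(2*(2-y)) < - ln (1-y)"
proof -
  let ?f = "\<lambda>y::real. - ln (1-y) - 3*y/(2*(2-y))"
  have "?f 0 < ?f y"
  proof (rule DERIV_pos_imp_increasing[OF assms(1)])
    fix t :: real assume t: "0 \<le> t" "t \<le> y"
    have t2: "2 - t \<noteq> 0" "1 - t \<noteq> 0" using t assms by auto
    have d: "DERIV ?f t :> 1/(1-t) - 3/(2-t)^2"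
      apply (rule DERIV_cong)
      using t2 t assms apply (auto intro!: derivative_eq_intros)[1]
      using t2 by (simp add: divide_simps power2_eq_square) (simp add: algebra_simps)
    have "3*(1-t) < (2-t)^2" by (simp add: power2_eq_square algebra_simps, use mult_nonneg_nonneg[of t t] t assms in linarith)
    then have "3/(2-t)^2 < 1/(1-t)" using t assms by (simp add: field_simps)
    then show "\<exists>d. DERIV ?f t :> d \<and> 0 < d" using d by auto
  qed
  then show ?thesis by simp
qed

lemma amgm3:
  fixes a b c :: real assumes "a \<ge> 0" "b \<ge> 0" "c \<ge> 0" "a \<noteq> b"
  shows "27*a*b*c < (a+b+c)^3"
proof -
  have id: "2*((a+b+c)^3 - 27*a*b*c) = (a+b+c)*((a-b)^2+(b-c)^2+(c-a)^2) + 6*(a*(b-c)^2+b*(c-a)^2+c*(a-b)^2)"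
    by (simp add: power2_eq_square power3_eq_cube algebra_simps)
  have "(a-b)^2 > 0" using assms by simp
  then have "(a-b)^2+(b-c)^2+(c-a)^2 > 0" by (smt (verit) zero_le_power2)
  moreover have "a+b+c > 0" using assms by linarith
  ultimately have "(a+b+c)*((a-b)^2+(b-c)^2+(c-a)^2) > 0" by simp
  moreover have "a*(b-c)^2+b*(c-a)^2+c*(a-b)^2 \<ge> 0" using assms by simp
  ultimately have "2*((a+b+c)^3 - 27*a*b*c) > 0" unfolding id by (intro add_pos_nonneg) auto
  then show ?thesis by (simp only: zero_less_mult_iff) simp
qed

lemma KL_bound_int:
  fixes x c :: real assumes x: "0<x" "x<1" and c: "0 < c" "c < 1" "c \<noteq> x"
  shows "3*(c-x)^2/(2*(3*x*(1-x) + (1-2*x)*(c-x))) < KL c x"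
proof -
  define S where "S c = 3*x*(1-x) + (1-2*x)*(c-x)" for c
  have Seq: "S c = x*(1-c) + c*(1-x) + x*(1-x)" for c unfolding S_def by (simp add: algebra_simps)
  have Spos: "S c > 0" if "0 \<le> c" "c \<le> 1" for c
    unfolding Seq using that x by (intro add_nonneg_pos) (auto intro!: mult_pos_pos)
  define h where "h c = KL c x - 3*(c-x)^2/(2*S c)" for c
  define h1 where "h1 c = ln c - ln x - ln (1-c) + ln (1-x) - 3*(c-x)*(2*S c - (1-2*x)*(c-x))/(2*(S c)^2)" for c
  define h2 where "h2 c = 1/c + 1/(1-c) - 27*(x*(1-x))^2/(S c)^3" for c
  have dh: "DERIV h t :> h1 t" if "0 < t" "t < 1" for t
  proof -
    have "S t \<noteq> 0" using Spos[of t] that by auto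
    show ?thesis unfolding h_def h1_def KL_def
      apply (rule DERIV_cong)
      using that x \<open>S t \<noteq> 0\<close> apply (auto intro!: derivative_eq_intros simp: S_def)[1]
      using that x \<open>S t \<noteq> 0\<close> by (simp add: divide_simps power2_eq_square S_def) (simp add: algebra_simps)
  qed
  have dh1: "DERIV h1 t :> h2 t" if "0 < t" "t < 1" for t
  proof -
    have "S t \<noteq> 0" using Spos[of t] that by auto
    show ?thesis unfolding h1_def h2_def
      apply (rule DERIV_cong)
      using that x \<open>S t \<noteq> 0\<close> apply (auto intro!: derivative_eq_intros simp: S_def)[1]
      using that x \<open>S t \<noteq> 0\<close> by (simp add: divide_simps power2_eq_square power3_eq_cube S_def) (simp add: algebra_simps)
  qed
  have h2pos: "h2 t > 0" if "0 < t" "t < 1" "t \<noteq> x" for t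
  proof -
    have "27*(x*(1-t))*(t*(1-x))*(x*(1-x)) < (x*(1-t) + t*(1-x) + x*(1-x))^3"
    proof (rule amgm3)
      show "x*(1-t) \<noteq> t*(1-x)" using that by (simp add: algebra_simps)
    qed (use that x in auto)
    then have A: "27*(x*(1-x))^2*(t*(1-t)) < (S t)^3" unfolding Seq by (simp add: power2_eq_square algebra_simps)
    have St: "S t > 0" using Spos[of t] that by auto
    have tt: "t*(1-t) > 0" using that by simp
    have "27*(x*(1-x))^2/(S t)^3 < 1/(t*(1-t))" using A St tt by (simp add: divide_simps)
    moreover have "1/t + 1/(1-t) = 1/(t*(1-t))" using that by (simp add: divide_simps)
    ultimately show ?thesis unfolding h2_def by linarith
  qed
  have h1x: "h1 x = 0" unfolding h1_def by simp
  have hx: "h x = 0" unfolding h_def KL_def by simp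
  have cont: "continuous_on {a..b} f" if ab: "0 < a" "b < 1" and df: "\<And>t. 0<t \<Longrightarrow> t<1 \<Longrightarrow> DERIV f t :> f' t" for a b :: real and f f' :: "real \<Rightarrow> real"
  proof (rule DERIV_atLeastAtMost_imp_continuous_on)
    fix t assume "a \<le> t" "t \<le> b"
    then have "0 < t" "t < 1" using ab by linarith+
    then show "\<exists>y. DERIV f t :> y" using df[of t] by blast
  qed
  have "h c > 0"
  proof (cases "c > x")
    case True
    have h1p: "h1 t > 0" if "x < t" "t < 1" for t
    proof -
      have "h1 x < h1 t"
        by (rule DERIV_pos_imp_increasing_open[OF that(1)])
           (use that x h2pos dh1 in \<open>force intro!: cont[of x t h1 h2]\<close>)+
      then show ?thesis using h1x by simp
    qed
    have "h x < h c"
      by (rule DERIV_pos_imp_increasing_open[OF True])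
         (use True c x h1p dh in \<open>force intro!: cont[of x c h h1]\<close>)+
    then show ?thesis using hx by simp
  next
    case False
    then have cx: "c < x" using c by simp
    have h1n: "h1 t < 0" if "0 < t" "t < x" for t
    proof -
      have "h1 t < h1 x"
        by (rule DERIV_pos_imp_increasing_open[OF that(2)])
           (use that x h2pos dh1 in \<open>force intro!: cont[of t x h1 h2]\<close>)+
      then show ?thesis using h1x by simp
    qed
    have "h x < h c"
      by (rule DERIV_neg_imp_decreasing_open[OF cx])
         (use cx c x h1n dh in \<open>force intro!: cont[of c x h h1]\<close>)+
    then show ?thesis using hx by simp
  qed
  then show ?thesis unfolding h_def S_def by simp
qed

lemma KL_bound:
  fixes x c :: real assumes x: "0<x" "x<1" and c: "0 \<le> c" "c \<le> 1" "c \<noteq> x"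
  shows "(c-x)^2 < KL c x * (2*x*(1-x) + 2/3*(1-2*x)*(c-x))"
proof -
  have Seq: "3*x*(1-x) + (1-2*x)*(c-x) = x*(1-c) + c*(1-x) + x*(1-x)" by (simp add: algebra_simps)
  have Spos: "3*x*(1-x) + (1-2*x)*(c-x) > 0"
    unfolding Seq using c x by (intro add_nonneg_pos) (auto intro!: mult_pos_pos)
  have main: "3*(c-x)^2/(2*(3*x*(1-x) + (1-2*x)*(c-x))) < KL c x"
  proof -
    consider "c = 0" | "c = 1" | "0 < c \<and> c < 1" using c by linarith
    then show ?thesis
    proof cases
      case 1
      have "3*x/(2*(2-x)) < - ln (1-x)" by (rule aux0) (use x in auto)
      moreover have "3*(c-x)^2/(2*(3*x*(1-x) + (1-2*x)*(c-x))) = 3*x/(2*(2-x))"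
        using 1 x by (simp add: divide_simps power2_eq_square) (simp add: algebra_simps)
      ultimately show ?thesis using 1 by (simp add: KL_def)
    next
      case 2
      have "3*(1-x)/(2*(2-(1-x))) < - ln (1-(1-x))" by (rule aux0) (use x in auto)
      moreover have "3*(c-x)^2/(2*(3*x*(1-x) + (1-2*x)*(c-x))) = 3*(1-x)/(2*(2-(1-x)))"
      proof -
        have "x*x < x*1" using x by (intro mult_strict_left_mono) auto
        then have "x*x < 1" using x by linarith
        then have "x*x \<noteq> 1" by simp
        then show ?thesis using 2 x by (simp add: divide_simps power2_eq_square) (simp add: algebra_simps)
      qed
      ultimately show ?thesis using 2 by (simp add: KL_def)
    next
      case 3
      then show ?thesis using KL_bound_int[OF x] c by auto
    qed
  qed
  have "3*(c-x)^2 < KL c x * (2*(3*x*(1-x) + (1-2*x)*(c-x)))"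
    using main Spos by (simp add: divide_simps)
  moreover have "KL c x * (2*x*(1-x) + 2/3*(1-2*x)*(c-x)) = KL c x * (2*(3*x*(1-x) + (1-2*x)*(c-x)))/3"
    by (simp add: field_simps)
  ultimately show ?thesis by linarith
qed

lemma KL_fac_pos:
  fixes x c :: real assumes x: "0<x" "x<1" and c: "0 \<le> c" "c \<le> 1"
  shows "2*x*(1-x) + 2/3*(1-2*x)*(c-x) > 0"
proof -
  have Seq: "2*x*(1-x) + 2/3*(1-2*x)*(c-x) = 2/3*(x*(1-c) + c*(1-x) + x*(1-x))" by (simp add: field_simps)
  have "x*(1-c) + c*(1-x) + x*(1-x) > 0"
    using c x by (intro add_nonneg_pos) (auto intro!: mult_pos_pos)
  then show ?thesis unfolding Seq by simp
qed

lemma KL_pos: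
  fixes x c :: real assumes x: "0<x" "x<1" and c: "0 \<le> c" "c \<le> 1" "c \<noteq> x"
  shows "KL c x > 0"
proof (rule ccontr)
  assume "\<not> KL c x > 0"
  then have "KL c x * (2*x*(1-x) + 2/3*(1-2*x)*(c-x)) \<le> 0"
    using KL_fac_pos[OF x c(1,2)] by (simp add: mult_nonpos_nonneg)
  moreover have "(c-x)^2 > 0" using c by simp
  ultimately show False using KL_bound[OF x c] by linarith
qed

definition Gf :: "real \<Rightarrow> real \<Rightarrow> real \<Rightarrow> real" where
  "Gf p0 p1 t = t * ln (t/p0) + (1-t) * ln ((1-t)/p1)"

lemma Gf_deriv:
  fixes x :: real assumes "0 < p0" "0 < p1" "0 < x" "x < 1"
  shows "DERIV (Gf p0 p1) x :> ln (x/p0) - ln ((1-x)/p1)"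
  unfolding Gf_def
  apply (rule DERIV_cong)
  using assms apply (auto intro!: derivative_eq_intros)[1]
  using assms by (simp add: divide_simps)

lemma Gf_breg:
  fixes x c :: real assumes p: "0 < p0" "0 < p1" and x: "0 < x" "x < 1" and c: "0 \<le> c" "c \<le> 1"
  shows "Gf p0 p1 c - Gf p0 p1 x - (ln (x/p0) - ln ((1-x)/p1)) * (c - x) = KL c x"
proof -
  have l1: "c * ln (c/p0) = c * ln c - c * ln p0"
    using p c by (cases "c = 0") (auto simp: ln_div right_diff_distrib)
  have l2: "(1-c) * ln ((1-c)/p1) = (1-c) * ln (1-c) - (1-c) * ln p1"
    using p c by (cases "c = 1") (auto simp: ln_div right_diff_distrib)
  have l3: "ln (x/p0) = ln x - ln p0" "ln ((1-x)/p1) = ln (1-x) - ln p1" using p x by (auto simp: ln_div)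
  show ?thesis unfolding Gf_def KL_def l1 l2 l3 by (simp add: algebra_simps)
qed

lemma Gf_sc:
  fixes a m b :: real assumes p: "0 < p0" "0 < p1" and o: "a < m" "m < b" "0 \<le> a" "b \<le> 1"
  shows "(b-a) * Gf p0 p1 m < (b-m) * Gf p0 p1 a + (m-a) * Gf p0 p1 b"
proof -
  define D where "D = ln (m/p0) - ln ((1-m)/p1)"
  have m: "0 < m" "m < 1" using o by auto
  have ea: "Gf p0 p1 a = Gf p0 p1 m + D*(a-m) + KL a m" using Gf_breg[OF p m, of a] o unfolding D_def by simp
  have eb: "Gf p0 p1 b = Gf p0 p1 m + D*(b-m) + KL b m" using Gf_breg[OF p m, of b] o unfolding D_def by simp
  have ka: "KL a m > 0" by (rule KL_pos) (use o in auto)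
  have kb: "KL b m > 0" by (rule KL_pos) (use o in auto)
  have "(b-m) * KL a m > 0" "(m-a) * KL b m > 0" using ka kb o by auto
  then show ?thesis unfolding ea eb by (simp add: algebra_simps)
qed

lemma Gf_der_intro:
  "0 < p0 \<Longrightarrow> 0 < p1 \<Longrightarrow> 0 < x \<Longrightarrow> x < 1 \<Longrightarrow>
   (Gf p0 p1 has_real_derivative (ln (x/p0) - ln ((1-x)/p1))) (at x within s)"
  using Gf_deriv has_field_derivative_at_within by blast

definition ch :: "real \<Rightarrow> real \<Rightarrow> real \<Rightarrow> real \<Rightarrow> real \<Rightarrow> real" where
  "ch p0 p1 c m x = ((c-m)*Gf p0 p1 x + (m-x)*Gf p0 p1 c)/(c-x)"

lemma ch_deriv:
  fixes x c m :: real assumes p: "0 < p0" "0 < p1" and x: "0 < x" "x < 1" and c: "0 \<le> c" "c \<le> 1" "c \<noteq> x"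
  shows "DERIV (ch p0 p1 c m) x :> (m-c)*KL c x/(c-x)^2"
proof -
  have cx: "c - x \<noteq> 0" using c by simp
  have d: "DERIV (ch p0 p1 c m) x :> (((c-m)*(ln (x/p0) - ln ((1-x)/p1)) - Gf p0 p1 c)*(c-x) - ((c-m)*Gf p0 p1 x + (m-x)*Gf p0 p1 c)*(-1))/((c-x)*(c-x))"
    unfolding ch_def
    by (rule DERIV_divide) (auto intro!: derivative_eq_intros Gf_der_intro simp: p x cx c)
  have b: "Gf p0 p1 c - Gf p0 p1 x - (ln (x/p0) - ln ((1-x)/p1)) * (c - x) = KL c x"
    by (rule Gf_breg[OF p x c(1,2)])
  show ?thesis
    apply (rule DERIV_cong[OF d])
    unfolding b[symmetric] using cx by (simp add: power2_eq_square divide_simps) (simp add: algebra_simps)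
qed

lemma ch_at:
  assumes "c \<noteq> x"
  shows "ch p0 p1 c m x * ((c-x)) = (c-m)*Gf p0 p1 x + (m-x)*Gf p0 p1 c"
  using assms unfolding ch_def by simp

lemma ch_mono_r:
  fixes x1 x2 m c :: real assumes p: "0 < p0" "0 < p1" and o: "x1 < x2" "x2 < m" "m < c" "0 \<le> x1" "c \<le> 1"
  shows "ch p0 p1 c m x2 < ch p0 p1 c m x1"
proof -
  have sc: "(c-x1) * Gf p0 p1 x2 < (c-x2) * Gf p0 p1 x1 + (x2-x1) * Gf p0 p1 c"
    by (rule Gf_sc[OF p]) (use o in auto)
  have sc2: "(c-m)*((c-x1) * Gf p0 p1 x2) < (c-m)*((c-x2) * Gf p0 p1 x1 + (x2-x1) * Gf p0 p1 c)"
    using sc o by (intro mult_strict_left_mono) auto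
  have pos: "c - x1 > 0" "c - x2 > 0" using o by auto
  have "(c-x1)*((c-m)*Gf p0 p1 x2 + (m-x2)*Gf p0 p1 c) < (c-x2)*((c-m)*Gf p0 p1 x1 + (m-x1)*Gf p0 p1 c)"
    using sc2 by (simp add: algebra_simps)
  then show ?thesis unfolding ch_def using pos by (simp add: divide_simps mult.commute)
qed

lemma ch_mono_l:
  fixes x1 x2 m c :: real assumes p: "0 < p0" "0 < p1" and o: "c < m" "m < x2" "x2 < x1" "0 \<le> c" "x1 \<le> 1"
  shows "ch p0 p1 c m x2 < ch p0 p1 c m x1"
proof -
  have sc: "(x1-c) * Gf p0 p1 x2 < (x1-x2) * Gf p0 p1 c + (x2-c) * Gf p0 p1 x1"
    by (rule Gf_sc[OF p]) (use o in auto)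
  have sc2: "(m-c)*((x1-c) * Gf p0 p1 x2) < (m-c)*((x1-x2) * Gf p0 p1 c + (x2-c) * Gf p0 p1 x1)"
    using sc o by (intro mult_strict_left_mono) auto
  have pos: "x1 - c > 0" "x2 - c > 0" using o by auto
  have "(x1-c)*((m-c)*Gf p0 p1 x2 + (x2-m)*Gf p0 p1 c) < (x2-c)*((m-c)*Gf p0 p1 x1 + (x1-m)*Gf p0 p1 c)"
    using sc2 by (simp add: algebra_simps)
  moreover have e: "ch p0 p1 c m x2 = ((m-c)*Gf p0 p1 x2 + (x2-m)*Gf p0 p1 c)/(x2-c)"
    "ch p0 p1 c m x1 = ((m-c)*Gf p0 p1 x1 + (x1-m)*Gf p0 p1 c)/(x1-c)"
    unfolding ch_def using pos by (simp_all add: divide_simps) (simp_all add: algebra_simps)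
  ultimately show ?thesis unfolding e using pos by (simp add: divide_simps mult.commute)
qed

definition om :: "real \<Rightarrow> real" where "om x = exp ((2/3) * (ln x + ln (1-x)))"

definition phi :: "real \<Rightarrow> real \<Rightarrow> real" where "phi c x = om x * KL c x / (c-x)^2"

lemma phi_deriv:
  fixes x c :: real assumes x: "0 < x" "x < 1" and c: "c \<noteq> x"
  shows "DERIV (phi c) x :> om x * (KL c x * (2*x*(1-x) + 2/3*(1-2*x)*(c-x)) - (c-x)^2)/(x*(1-x)*(c-x)^3)"
proof -
  have cx: "c - x \<noteq> 0" "1 - x \<noteq> 0" using c x by auto
  show ?thesis unfolding phi_def om_def KL_def
    apply (rule DERIV_cong)
    using x cx apply (auto intro!: derivative_eq_intros)[1]
    using x cx by (simp add: power2_eq_square power3_eq_cube divide_simps) (simp add: algebra_simps)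
qed

lemma om_pos: "om x > 0" unfolding om_def by simp

lemma term_neg:
  fixes x c m :: real assumes x: "0 < x" "x < 1" and c: "0 \<le> c" "c \<le> 1" and mc: "(m-c)*(x-c) > 0"
  shows "(m-c) * (om x * (KL c x * (2*x*(1-x) + 2/3*(1-2*x)*(c-x)) - (c-x)^2)/(x*(1-x)*(c-x)^3)) < 0"
proof -
  have cx: "c \<noteq> x" using mc by auto
  have A: "KL c x * (2*x*(1-x) + 2/3*(1-2*x)*(c-x)) - (c-x)^2 > 0" using KL_bound[OF x c cx] by simp
  have v: "x*(1-x) > 0" using x by simp
  have "(m-c)*(c-x) = -((m-c)*(x-c))" by (simp add: algebra_simps)
  then have "(m-c)*(c-x) < 0" using mc by linarith
  moreover have "(c-x)*(c-x) > 0" using cx by (simp flip: power2_eq_square)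
  ultimately have "((m-c)*(c-x))*((c-x)*(c-x)) < 0" by (rule mult_neg_pos)
  then have B: "(m-c)*(c-x)^3 < 0" by (simp add: power3_eq_cube mult.assoc)
  have E: "(m-c) * (om x * (KL c x * (2*x*(1-x) + 2/3*(1-2*x)*(c-x)) - (c-x)^2)/(x*(1-x)*(c-x)^3))
       = (om x * (KL c x * (2*x*(1-x) + 2/3*(1-2*x)*(c-x)) - (c-x)^2) / (x*(1-x))) * ((m-c)/(c-x)^3)"
    by (simp add: field_simps)
  have P: "om x * (KL c x * (2*x*(1-x) + 2/3*(1-2*x)*(c-x)) - (c-x)^2) / (x*(1-x)) > 0"
    using A v om_pos[of x] by simp
  have N: "(m-c)/(c-x)^3 < 0"
  proof -
    have "(m-c)/(c-x)^3 = ((m-c)*(c-x)^3)/((c-x)^3*(c-x)^3)" using cx by (simp add: field_simps)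
    moreover have "(c-x)^3*(c-x)^3 > 0" using cx by (simp flip: power_add)
    ultimately show ?thesis using B by (simp add: divide_neg_pos)
  qed
  show ?thesis by (subst E) (rule mult_pos_neg[OF P N])
qed

lemma RA:
  fixes I :: "'b set" and M c mu :: "'b \<Rightarrow> real" and u0 :: real
  assumes p: "0 < p0" "0 < p1" and fin: "finite I" and ne: "I \<noteq> {}"
    and u0: "0 \<le> u0" "u0 \<le> 1"
    and M: "\<forall>i\<in>I. M i > 0" and c: "\<forall>i\<in>I. 0 \<le> c i \<and> c i \<le> 1"
    and mu: "\<forall>i\<in>I. (mu i - u0)*(c i - mu i) > 0"
  shows "\<exists>x. 0 \<le> x \<and> x \<le> 1 \<and> (\<forall>i\<in>I. (x - mu i)*(c i - mu i) < 0) \<and>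
     (\<Sum>i\<in>I. M i * ch p0 p1 (c i) (mu i) x) < (\<Sum>i\<in>I. M i * ch p0 p1 (c i) (mu i) u0)"
proof -
  define F where "F x = (\<Sum>i\<in>I. M i * ch p0 p1 (c i) (mu i) x)" for x
  have side: "(u0 < mu i \<and> mu i < c i) \<or> (c i < mu i \<and> mu i < u0)" if "i \<in> I" for i
    using mu that by (auto simp: zero_less_mult_iff)
  define Rt where "Rt = {i\<in>I. u0 < c i}"
  define Lf where "Lf = {i\<in>I. c i < u0}"
  have RtLf: "I = Rt \<union> Lf" using side unfolding Rt_def Lf_def by fastforce
  have finR: "finite Rt" "finite Lf" using fin unfolding Rt_def Lf_def by auto
  have sR: "u0 < mu i \<and> mu i < c i" if "i \<in> Rt" for i using side[of i] that unfolding Rt_def by auto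
  have sL: "c i < mu i \<and> mu i < u0" if "i \<in> Lf" for i using side[of i] that unfolding Lf_def by auto
  consider "Lf = {}" | "Rt = {}" | "Lf \<noteq> {} \<and> Rt \<noteq> {}" by blast
  then show ?thesis
  proof cases
    case 1
    then have IR: "I = Rt" using RtLf by auto
    define hi where "hi = Min (mu ` I)"
    have hi: "hi \<le> mu i" if "i \<in> I" for i unfolding hi_def using fin that by auto
    have hiin: "hi \<in> mu ` I" unfolding hi_def using fin ne by auto
    then have u0hi: "u0 < hi" using sR IR by auto
    define x where "x = (u0 + hi)/2"
    have xi: "u0 < x \<and> x < mu i \<and> mu i < c i" if "i \<in> I" for i
      using hi[OF that] sR[of i] that IR u0hi unfolding x_def by auto
    have "F x < F u0" unfolding F_def
    proof (rule sum_strict_mono_ex1[OF fin])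
      show "\<forall>i\<in>I. M i * ch p0 p1 (c i) (mu i) x \<le> M i * ch p0 p1 (c i) (mu i) u0"
        using xi M c ch_mono_r[OF p] u0 by (smt (verit) mult_left_mono)
      obtain i where "i \<in> I" using ne by auto
      then show "\<exists>i\<in>I. M i * ch p0 p1 (c i) (mu i) x < M i * ch p0 p1 (c i) (mu i) u0"
        using xi M c ch_mono_r[OF p] u0 by (meson mult_strict_left_mono)
    qed
    moreover have "0 \<le> x" "x \<le> 1" using xi c u0 ne by fastforce+
    moreover have "\<forall>i\<in>I. (x - mu i)*(c i - mu i) < 0" using xi by (auto simp: mult_neg_pos)
    ultimately show ?thesis unfolding F_def by blast
  next
    case 2
    then have IL: "I = Lf" using RtLf by auto
    define lo where "lo = Max (mu ` I)"
    have lo: "mu i \<le> lo" if "i \<in> I" for i unfolding lo_def using fin that by auto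
    have loin: "lo \<in> mu ` I" unfolding lo_def using fin ne by auto
    then have u0lo: "lo < u0" using sL IL by auto
    define x where "x = (u0 + lo)/2"
    have xi: "c i < mu i \<and> mu i < x \<and> x < u0" if "i \<in> I" for i
      using lo[OF that] sL[of i] that IL u0lo unfolding x_def by auto
    have "F x < F u0" unfolding F_def
    proof (rule sum_strict_mono_ex1[OF fin])
      show "\<forall>i\<in>I. M i * ch p0 p1 (c i) (mu i) x \<le> M i * ch p0 p1 (c i) (mu i) u0"
        using xi M c ch_mono_l[OF p] u0 by (smt (verit) mult_left_mono)
      obtain i where "i \<in> I" using ne by auto
      then show "\<exists>i\<in>I. M i * ch p0 p1 (c i) (mu i) x < M i * ch p0 p1 (c i) (mu i) u0"
        using xi M c ch_mono_l[OF p] u0 by (meson mult_strict_left_mono)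
    qed
    moreover have "0 \<le> x" "x \<le> 1" using xi c u0 ne by fastforce+
    moreover have "\<forall>i\<in>I. (x - mu i)*(c i - mu i) < 0" using xi by (auto simp: mult_pos_neg)
    ultimately show ?thesis unfolding F_def by blast
  next
    case 3
    define lo where "lo = Max (mu ` Lf)"
    define hi where "hi = Min (mu ` Rt)"
    have lo: "mu i \<le> lo" if "i \<in> Lf" for i unfolding lo_def using finR that by auto
    have hi: "hi \<le> mu i" if "i \<in> Rt" for i unfolding hi_def using finR that by auto
    have "lo \<in> mu ` Lf" unfolding lo_def using finR 3 by auto
    then obtain il where il: "il \<in> Lf" "lo = mu il" by auto
    have "hi \<in> mu ` Rt" unfolding hi_def using finR 3 by auto
    then obtain ir where ir: "ir \<in> Rt" "hi = mu ir" by auto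
    have ILf: "i \<in> I" if "i \<in> Lf" for i using that Lf_def by auto
    have IRt: "i \<in> I" if "i \<in> Rt" for i using that Rt_def by auto
    have lou: "0 < lo" "lo < u0" using sL[OF il(1)] c ILf[OF il(1)] il by auto
    have uhi: "u0 < hi" "hi < 1" using sR[OF ir(1)] c IRt[OF ir(1)] ir by auto
    have valid0: "(x - mu i)*(c i - mu i) < 0 \<and> c i \<noteq> x \<and> (mu i - c i)*(x - c i) > 0"
      if "lo < x" "x < hi" "i \<in> I" for x i
    proof -
      have "i \<in> Lf \<or> i \<in> Rt" using RtLf that by auto
      then show ?thesis
      proof
        assume iL: "i \<in> Lf"
        then have "c i < mu i" "mu i < x" using sL lo that by force+
        then show ?thesis by (auto simp: mult_pos_neg)
      next
        assume iR: "i \<in> Rt"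
        then have "mu i < c i" "x < mu i" using sR hi that by force+
        then show ?thesis by (auto simp: mult_neg_pos mult_neg_neg)
      qed
    qed
    have valid: "(x - mu i)*(c i - mu i) < 0" "c i \<noteq> x" "(mu i - c i)*(x - c i) > 0"
      if "lo < x" "x < hi" "i \<in> I" for x i using valid0[OF that] by auto
    define F' where "F' x = (\<Sum>i\<in>I. M i * ((mu i - c i) * KL (c i) x / (c i - x)^2))" for x
    define psi where "psi x = (\<Sum>i\<in>I. M i * ((mu i - c i) * phi (c i) x))" for x
    define psi' where "psi' x = (\<Sum>i\<in>I. M i * ((mu i - c i) * (om x * (KL (c i) x * (2*x*(1-x) + 2/3*(1-2*x)*(c i-x)) - (c i-x)^2)/(x*(1-x)*(c i-x)^3))))" for x
    have x01: "0 < x" "x < 1" if "lo < x" "x < hi" for x using that lou uhi by auto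
    have dF: "DERIV F x :> F' x" if "lo < x" "x < hi" for x
      unfolding F_def F'_def
      by (rule DERIV_sum, rule DERIV_cmult, rule ch_deriv[OF p x01[OF that]]) (use c valid[OF that] in auto)
    have dpsi: "DERIV psi x :> psi' x" if "lo < x" "x < hi" for x
      unfolding psi_def psi'_def
      by (rule DERIV_sum, rule DERIV_cmult, rule DERIV_cmult, rule phi_deriv[OF x01[OF that]]) (use valid[OF that] in auto)
    have psi'neg: "psi' x < 0" if "lo < x" "x < hi" for x
    proof -
      have "psi' x < (\<Sum>i\<in>I. 0)" unfolding psi'_def
      proof (rule sum_strict_mono[OF fin ne])
        fix i assume i: "i \<in> I"
        have T: "(mu i - c i) * (om x * (KL (c i) x * (2*x*(1-x) + 2/3*(1-2*x)*(c i-x)) - (c i-x)^2)/(x*(1-x)*(c i-x)^3)) < 0"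
          by (rule term_neg[OF x01[OF that]]) (use c i valid[OF that i] in auto)
        show "M i * ((mu i - c i) * (om x * (KL (c i) x * (2*x*(1-x) + 2/3*(1-2*x)*(c i-x)) - (c i-x)^2)/(x*(1-x)*(c i-x)^3))) < 0"
          by (rule mult_pos_neg[OF _ T]) (use M i in auto)
      qed
      then show ?thesis by simp
    qed
    have psiF: "psi x = om x * F' x" for x
      unfolding psi_def F'_def phi_def sum_distrib_left by (rule sum.cong) (auto simp: algebra_simps)
    have psidec: "psi b < psi a" if "lo < a" "a < b" "b < hi" for a b
      by (rule DERIV_neg_imp_decreasing[OF that(2)]) (use that dpsi psi'neg in \<open>meson less_le_trans le_less_trans\<close>)
    have contF: "continuous_on {a..b} F" if "lo < a" "b < hi" for a b
    proof (rule DERIV_atLeastAtMost_imp_continuous_on)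
      fix t assume "a \<le> t" "t \<le> b"
      then have "lo < t" "t < hi" using that by linarith+
      then show "\<exists>y. DERIV F t :> y" using dF by blast
    qed
    have u0in: "lo < u0" "u0 < hi" using lou uhi by auto
    show ?thesis
    proof (cases "psi u0 \<le> 0")
      case True
      define x where "x = (u0 + hi)/2"
      have x: "u0 < x" "x < hi" using u0in unfolding x_def by auto
      have "F x < F u0"
      proof (rule DERIV_neg_imp_decreasing_open[OF x(1)])
        fix t assume t: "u0 < t" "t < x"
        have "psi t < psi u0" using psidec[of u0 t] t x u0in by auto
        then have "om t * F' t < 0" using True psiF by simp
        then have "F' t < 0" using om_pos[of t] by (simp add: mult_less_0_iff)
        then show "\<exists>y. DERIV F t :> y \<and> y < 0" using dF[of t] t x u0in by auto
      next
        show "continuous_on {u0..x} F" by (rule contF) (use x u0in in auto)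
      qed
      moreover have "0 \<le> x" "x \<le> 1" using x u0in uhi u0 by auto
      moreover have "\<forall>i\<in>I. (x - mu i)*(c i - mu i) < 0" using valid x u0in by auto
      ultimately show ?thesis unfolding F_def by blast
    next
      case False
      define x where "x = (u0 + lo)/2"
      have x: "x < u0" "lo < x" using u0in unfolding x_def by auto
      have "F x < F u0"
      proof (rule DERIV_pos_imp_increasing_open[OF x(1)])
        fix t assume t: "x < t" "t < u0"
        have "psi u0 < psi t" using psidec[of t u0] t x u0in by auto
        then have "om t * F' t > 0" using False psiF by simp
        then have "F' t > 0" using om_pos[of t] by (simp add: zero_less_mult_iff)
        then show "\<exists>y. DERIV F t :> y \<and> 0 < y" using dF[of t] t x u0in by auto
      next
        show "continuous_on {x..u0} F" by (rule contF) (use x u0in in auto)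
      qed
      moreover have "0 \<le> x" "x \<le> 1" using x u0in lou u0 by auto
      moreover have "\<forall>i\<in>I. (x - mu i)*(c i - mu i) < 0" using valid x u0in by auto
      ultimately show ?thesis unfolding F_def by blast
    qed
  qed
qed



definition OPTP :: "real \<Rightarrow> real \<Rightarrow> 'z set \<Rightarrow> 'y set \<Rightarrow> ('z \<Rightarrow> 'y \<Rightarrow> real) \<Rightarrow> ('z \<Rightarrow> real) \<Rightarrow> bool" where
  "OPTP p0 p1 Z Y f u \<longleftrightarrow> (\<forall>t g. (\<forall>z\<in>Z. 0 \<le> t z \<and> t z \<le> 1) \<longrightarrow> (\<forall>z\<in>Z. \<forall>y\<in>Y. 0 \<le> g z y) \<longrightarrow>
     (\<forall>y\<in>Y. (\<Sum>z\<in>Z. g z y) = (\<Sum>z\<in>Z. f z y) \<and> (\<Sum>z\<in>Z. g z y * t z) = (\<Sum>z\<in>Z. f z y * u z)) \<longrightarrow>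
     (\<Sum>y\<in>Y. \<Sum>z\<in>Z. f z y * Gf p0 p1 (u z)) \<le> (\<Sum>y\<in>Y. \<Sum>z\<in>Z. g z y * Gf p0 p1 (t z)))"

lemma SF:
  assumes p: "0 < p0" "0 < p1" and fin: "finite Z" "finite Y"
    and u: "\<forall>z\<in>Z. 0 \<le> u z \<and> u z \<le> 1" and f: "\<forall>z\<in>Z. \<forall>y\<in>Y. 0 \<le> f z y"
    and opt: "OPTP p0 p1 Z Y f u"
    and y: "y \<in> Y" and z: "z1 \<in> Z" "z2 \<in> Z" "z3 \<in> Z"
    and fp: "f z1 y > 0" "f z3 y > 0" and o: "u z1 < u z2" "u z2 < u z3"
  shows False
proof -
  define u1 u2 u3 where "u1 = u z1" and "u2 = u z2" and "u3 = u z3"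
  have d: "z1 \<noteq> z2" "z1 \<noteq> z3" "z2 \<noteq> z3" using o by auto
  define \<alpha> where "\<alpha> = min (f z1 y) (f z3 y * (u3-u2)/(u2-u1))"
  have ap: "\<alpha> > 0" unfolding \<alpha>_def using fp o u1_def u2_def u3_def by auto
  define \<gamma> where "\<gamma> = \<alpha>*(u3-u1)/(u3-u2)"
  define \<delta> where "\<delta> = \<alpha>*(u2-u1)/(u3-u2)"
  have a1: "\<alpha> \<le> f z1 y" unfolding \<alpha>_def by simp
  have "\<alpha> \<le> f z3 y * (u3-u2)/(u2-u1)" unfolding \<alpha>_def by simp
  then have a3: "\<delta> \<le> f z3 y" unfolding \<delta>_def using o u1_def u2_def u3_def by (simp add: field_simps)
  have gp: "\<gamma> \<ge> 0" unfolding \<gamma>_def using ap o u1_def u2_def u3_def by simp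
  have gad: "\<gamma> = \<alpha> + \<delta>" unfolding \<gamma>_def \<delta>_def using o u1_def u2_def u3_def by (simp add: field_simps)
  have mom: "\<gamma> * u2 = \<alpha> * u1 + \<delta> * u3" unfolding \<gamma>_def \<delta>_def using o u1_def u2_def u3_def
    by (simp add: field_simps)
  define D where "D z = (if z = z1 then - \<alpha> else 0) + (if z = z2 then \<gamma> else 0) + (if z = z3 then - \<delta> else 0)" for z
  define g where "g z y' = f z y' + (if y' = y then D z else 0)" for z y'
  have sD: "(\<Sum>z\<in>Z. D z * h z) = - \<alpha> * h z1 + \<gamma> * h z2 - \<delta> * h z3" for h :: "_ \<Rightarrow> real"
    unfolding D_def using fin z by (simp add: distrib_right sum.distrib if_distrib[where f="\<lambda>a. a * _"] cong: if_cong)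
  have sD1: "(\<Sum>z\<in>Z. D z) = - \<alpha> + \<gamma> - \<delta>" using sD[of "\<lambda>_. 1"] by simp
  have gnn: "\<forall>z\<in>Z. \<forall>y'\<in>Y. 0 \<le> g z y'"
  proof (intro ballI)
    fix z y' assume zz: "z \<in> Z" "y' \<in> Y"
    show "0 \<le> g z y'"
    proof (cases "y' = y")
      case True
      then show ?thesis unfolding g_def D_def using f zz a1 a3 gp d by auto
    qed (use f zz in \<open>auto simp: g_def\<close>)
  qed
  have bal: "\<forall>y'\<in>Y. (\<Sum>z\<in>Z. g z y') = (\<Sum>z\<in>Z. f z y') \<and> (\<Sum>z\<in>Z. g z y' * u z) = (\<Sum>z\<in>Z. f z y' * u z)"
  proof
    fix y' assume "y' \<in> Y"
    show "(\<Sum>z\<in>Z. g z y') = (\<Sum>z\<in>Z. f z y') \<and> (\<Sum>z\<in>Z. g z y' * u z) = (\<Sum>z\<in>Z. f z y' * u z)"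
    proof (cases "y' = y")
      case True
      have "(\<Sum>z\<in>Z. g z y') = (\<Sum>z\<in>Z. f z y') + (\<Sum>z\<in>Z. D z)" unfolding g_def using True by (simp add: sum.distrib)
      moreover have "(\<Sum>z\<in>Z. g z y' * u z) = (\<Sum>z\<in>Z. f z y' * u z) + (\<Sum>z\<in>Z. D z * u z)"
        unfolding g_def using True by (simp add: sum.distrib distrib_right)
      ultimately show ?thesis using sD[of u] sD1 gad mom u1_def u2_def u3_def by simp
    qed (simp add: g_def)
  qed
  have "(\<Sum>y\<in>Y. \<Sum>z\<in>Z. f z y * Gf p0 p1 (u z)) \<le> (\<Sum>y\<in>Y. \<Sum>z\<in>Z. g z y * Gf p0 p1 (u z))"
    using opt gnn bal u unfolding OPTP_def by blast
  also have "\<dots> = (\<Sum>y\<in>Y. \<Sum>z\<in>Z. f z y * Gf p0 p1 (u z)) + (\<Sum>z\<in>Z. D z * Gf p0 p1 (u z))"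
  proof -
    have "(\<Sum>y'\<in>Y. \<Sum>z\<in>Z. g z y' * Gf p0 p1 (u z)) = (\<Sum>y'\<in>Y. (\<Sum>z\<in>Z. f z y' * Gf p0 p1 (u z)) + (if y' = y then (\<Sum>z\<in>Z. D z * Gf p0 p1 (u z)) else 0))"
      unfolding g_def by (rule sum.cong) (auto simp: distrib_right sum.distrib)
    also have "\<dots> = (\<Sum>y\<in>Y. \<Sum>z\<in>Z. f z y * Gf p0 p1 (u z)) + (\<Sum>z\<in>Z. D z * Gf p0 p1 (u z))"
      using fin y by (simp add: sum.distrib)
    finally show ?thesis .
  qed
  finally have "0 \<le> - \<alpha> * Gf p0 p1 u1 + \<gamma> * Gf p0 p1 u2 - \<delta> * Gf p0 p1 u3"
    using sD[of "\<lambda>z. Gf p0 p1 (u z)"] u1_def u2_def u3_def by simp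
  moreover have "\<gamma> * Gf p0 p1 u2 < \<alpha> * Gf p0 p1 u1 + \<delta> * Gf p0 p1 u3"
  proof -
    have sc: "(u3-u1) * Gf p0 p1 u2 < (u3-u2) * Gf p0 p1 u1 + (u2-u1) * Gf p0 p1 u3"
      by (rule Gf_sc[OF p]) (use o u z u1_def u2_def u3_def in auto)
    have "\<alpha>/(u3-u2) > 0" using ap o u2_def u3_def by simp
    from mult_strict_left_mono[OF sc this] show ?thesis
      unfolding \<gamma>_def \<delta>_def using o u2_def u3_def by (simp add: field_simps)
  qed
  ultimately show False by linarith
qed

lemma sgn_aux:
  fixes a b x :: real assumes "(x - b)*(a - b) < 0"
  shows "(a - b)/(a - x) > 0" "(b - x)/(a - x) > 0" "a - x \<noteq> 0"
proof -
  have "(a > b \<and> x < b) \<or> (a < b \<and> x > b)" using assms by (auto simp: mult_less_0_iff)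
  then show "(a - b)/(a - x) > 0" "(b - x)/(a - x) > 0" "a - x \<noteq> 0"
    by (auto simp: zero_less_divide_iff)
qed

lemma OFL:
  fixes f u :: "'a \<Rightarrow> real" and V :: real
  assumes fin: "finite Z" and f: "\<forall>a\<in>Z. 0 \<le> f a"
    and z: "z \<in> Z" "f z > 0" and bal: "(\<Sum>a\<in>Z. f a * u a) = (\<Sum>a\<in>Z. f a) * V"
    and ne: "u z \<noteq> V"
  shows "\<exists>a\<in>Z. f a > 0 \<and> (u a - V) * (u z - V) < 0"
proof (rule ccontr)
  assume "\<not> ?thesis"
  then have nn: "\<forall>a\<in>Z. 0 \<le> f a * ((u a - V) * (u z - V))"
  proof (intro ballI)
    fix a assume a: "a \<in> Z" and h: "\<not> (\<exists>a\<in>Z. 0 < f a \<and> (u a - V) * (u z - V) < 0)"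
    show "0 \<le> f a * ((u a - V) * (u z - V))"
    proof (cases "f a = 0")
      case False
      then have "f a > 0" using f a by force
      then have "\<not> (u a - V) * (u z - V) < 0" using h a by auto
      then show ?thesis using \<open>f a > 0\<close> by simp
    qed simp
  qed
  have "(\<Sum>a\<in>Z. f a * ((u a - V) * (u z - V))) = (\<Sum>a\<in>Z. (f a * u a - f a * V) * (u z - V))"
    by (rule sum.cong) (simp_all add: algebra_simps)
  also have "\<dots> = (\<Sum>a\<in>Z. f a * u a - f a * V) * (u z - V)" by (simp add: sum_distrib_right)
  also have "\<dots> = ((\<Sum>a\<in>Z. f a * u a) - (\<Sum>a\<in>Z. f a) * V) * (u z - V)"
    by (simp add: sum_subtractf sum_distrib_right)
  also have "\<dots> = 0" using bal by simp
  finally have s0: "(\<Sum>a\<in>Z. f a * ((u a - V) * (u z - V))) = 0" .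
  have "(u z - V) * (u z - V) > 0" using ne by (simp flip: power2_eq_square)
  then have "f z * ((u z - V) * (u z - V)) > 0" using z by simp
  then have "(\<Sum>a\<in>Z. f a * ((u a - V) * (u z - V))) > 0"
    by (intro sum_pos2[OF fin z(1)]) (use nn in auto)
  then show False using s0 by simp
qed

lemma CL1:
  assumes p: "0 < p0" "0 < p1" and fin: "finite Z" "finite Y"
    and u: "\<forall>z\<in>Z. 0 \<le> u z \<and> u z \<le> 1" and f: "\<forall>z\<in>Z. \<forall>y\<in>Y. 0 \<le> f z y"
    and opt: "OPTP p0 p1 Z Y f u"
    and z: "z \<in> Z" and zp: "\<exists>y\<in>Y. f z y > 0"
    and wp: "\<forall>y\<in>Y. (\<Sum>a\<in>Z. f a y) > 0"
  shows "\<exists>y\<in>Y. (\<Sum>a\<in>Z. f a y * u a) = (\<Sum>a\<in>Z. f a y) * u z"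
proof (rule ccontr)
  assume "\<not> ?thesis"
  then have nv: "\<forall>y\<in>Y. (\<Sum>a\<in>Z. f a y * u a) \<noteq> (\<Sum>a\<in>Z. f a y) * u z" by blast
  define V where "V y = (\<Sum>a\<in>Z. f a y * u a) / (\<Sum>a\<in>Z. f a y)" for y
  have balV: "(\<Sum>a\<in>Z. f a y * u a) = (\<Sum>a\<in>Z. f a y) * V y" if "y \<in> Y" for y
    unfolding V_def using wp that by (simp add: less_imp_neq[symmetric])
  have Vne: "u z \<noteq> V y" if "y \<in> Y" for y using nv balV[OF that] that by auto
  define Yz where "Yz = {y\<in>Y. f z y > 0}"
  have Yz: "finite Yz" "Yz \<noteq> {}" "Yz \<subseteq> Y" using fin zp unfolding Yz_def by auto
  have "\<forall>y\<in>Yz. \<exists>a\<in>Z. f a y > 0 \<and> (u a - V y) * (u z - V y) < 0"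
  proof
    fix y assume y: "y \<in> Yz"
    show "\<exists>a\<in>Z. f a y > 0 \<and> (u a - V y) * (u z - V y) < 0"
      by (rule OFL[OF fin(1), of "\<lambda>a. f a y"]) (use y Yz_def f z balV Vne in auto)
  qed
  then obtain c where c: "\<forall>y\<in>Yz. c y \<in> Z \<and> f (c y) y > 0 \<and> (u (c y) - V y) * (u z - V y) < 0"
    by metis
  have cz: "c y \<noteq> z" if "y \<in> Yz" for y using c that by fastforce
  have ucz: "u (c y) \<noteq> u z" if "y \<in> Yz" for y using c that by fastforce
  define u0 where "u0 = u z"
  define M where "M y = f z y + f (c y) y" for y
  define cc where "cc y = u (c y)" for y
  define mu where "mu y = (f z y * u0 + f (c y) y * cc y) / M y" for y
  have Mp: "M y > 0" if "y \<in> Yz" for y unfolding M_def using c that Yz_def by auto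
  have muM: "M y * mu y = f z y * u0 + f (c y) y * cc y" if "y \<in> Yz" for y
    unfolding mu_def using Mp[OF that] by simp
  have e1: "(cc y - mu y) * M y = f z y * (cc y - u0)" if "y \<in> Yz" for y
    using muM[OF that] unfolding M_def by (simp add: algebra_simps)
  have e2: "(mu y - u0) * M y = f (c y) y * (cc y - u0)" if "y \<in> Yz" for y
    using muM[OF that] unfolding M_def by (simp add: algebra_simps)
  have mub: "(mu y - u0) * (cc y - mu y) > 0" if y: "y \<in> Yz" for y
  proof -
    have "(f (c y) y * (cc y - u0)) * (f z y * (cc y - u0)) = (f z y * f (c y) y) * (cc y - u0)^2"
      by (simp add: power2_eq_square algebra_simps)
    moreover have "(f z y * f (c y) y) * (cc y - u0)^2 > 0"
      using c y Yz_def ucz[OF y] unfolding cc_def u0_def by simp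
    ultimately have "((mu y - u0) * M y) * ((cc y - mu y) * M y) > 0"
      unfolding e1[OF y] e2[OF y] by linarith
    then show ?thesis using Mp[OF y] by (simp add: zero_less_mult_iff mult.commute mult.left_commute)
  qed
  obtain x where x: "0 \<le> x" "x \<le> 1" "\<forall>y\<in>Yz. (x - mu y)*(cc y - mu y) < 0"
    and less: "(\<Sum>y\<in>Yz. M y * ch p0 p1 (cc y) (mu y) x) < (\<Sum>y\<in>Yz. M y * ch p0 p1 (cc y) (mu y) u0)"
    using RA[OF p Yz(1,2), of u0 M cc mu] u z Mp c mub unfolding u0_def cc_def by auto
  have xv: "(x - mu y)*(cc y - mu y) < 0" if "y \<in> Yz" for y using x(3) that by auto
  define gz where "gz y = M y * (cc y - mu y)/(cc y - x)" for y
  define gc where "gc y = M y * (mu y - x)/(cc y - x)" for y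
  have ccx: "cc y - x \<noteq> 0" if "y \<in> Yz" for y using sgn_aux(3)[OF xv[OF that]] .
  have gz_nn: "gz y \<ge> 0" if "y \<in> Yz" for y
  proof -
    have "gz y = M y * ((cc y - mu y)/(cc y - x))" unfolding gz_def by simp
    moreover have "M y * ((cc y - mu y)/(cc y - x)) > 0" using sgn_aux(1)[OF xv[OF that]] Mp[OF that] by (rule mult_pos_pos[rotated])
    ultimately show ?thesis by linarith
  qed
  have gc_nn: "gc y \<ge> 0" if "y \<in> Yz" for y
  proof -
    have "gc y = M y * ((mu y - x)/(cc y - x))" unfolding gc_def by simp
    moreover have "M y * ((mu y - x)/(cc y - x)) > 0" using sgn_aux(2)[OF xv[OF that]] Mp[OF that] by (rule mult_pos_pos[rotated])
    ultimately show ?thesis by linarith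
  qed
  have gsum: "gz y + gc y = M y" if "y \<in> Yz" for y
  proof -
    have "gz y + gc y = (M y * (cc y - mu y) + M y * (mu y - x))/(cc y - x)" unfolding gz_def gc_def by (simp add: add_divide_distrib)
    also have "\<dots> = M y * (cc y - x)/(cc y - x)" by (simp add: algebra_simps)
    also have "\<dots> = M y" using ccx[OF that] by simp
    finally show ?thesis .
  qed
  have gmom: "gz y * x + gc y * cc y = f z y * u0 + f (c y) y * cc y" if "y \<in> Yz" for y
  proof -
    have "gz y * x + gc y * cc y = (M y * (cc y - mu y) * x + M y * (mu y - x) * cc y)/(cc y - x)" unfolding gz_def gc_def by (simp add: add_divide_distrib)
    also have "\<dots> = (M y * mu y) * (cc y - x)/(cc y - x)" by (simp add: algebra_simps)
    also have "\<dots> = M y * mu y" using ccx[OF that] by simp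
    finally have "gz y * x + gc y * cc y = M y * mu y" .
    then show ?thesis using muM[OF that] by simp
  qed
  have chx: "M y * ch p0 p1 (cc y) (mu y) x = gz y * Gf p0 p1 x + gc y * Gf p0 p1 (cc y)" if "y \<in> Yz" for y
  proof -
    have ne: "cc y \<noteq> x" using ccx[OF that] by simp
    show ?thesis unfolding gz_def gc_def ch_def using ne by (simp add: divide_simps) (simp add: algebra_simps)
  qed
  have ch0: "M y * ch p0 p1 (cc y) (mu y) u0 = f z y * Gf p0 p1 u0 + f (c y) y * Gf p0 p1 (cc y)" if y: "y \<in> Yz" for y
  proof -
    have ne: "cc y - u0 \<noteq> 0" using ucz[OF y] unfolding cc_def u0_def by simp
    have "M y * ch p0 p1 (cc y) (mu y) u0 = ((cc y - mu y) * M y * Gf p0 p1 u0 + (mu y - u0) * M y * Gf p0 p1 (cc y))/(cc y - u0)"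
      unfolding ch_def by (simp add: field_simps)
    also have "\<dots> = f z y * Gf p0 p1 u0 + f (c y) y * Gf p0 p1 (cc y)"
      unfolding e1[OF y] e2[OF y] using ne by (simp add: field_simps)
    finally show ?thesis .
  qed
  define t' where "t' a = (if a = z then x else u a)" for a
  define g where "g a y = (if y \<in> Yz then f a y + (if a = z then gz y - f z y else 0) + (if a = c y then gc y - f (c y) y else 0) else f a y)" for a y
  have P2: "g a y * h (t' a) = f a y * h (u a) + (if a = z then gz y * h x - f z y * h u0 else 0) + (if a = c y then (gc y - f (c y) y) * h (cc y) else 0)"
    if "y \<in> Yz" for a y and h :: "real \<Rightarrow> real"
    using that cz[OF that] unfolding g_def t'_def u0_def cc_def by (auto simp: algebra_simps)
  have P0: "g a y * h (t' a) = f a y * h (u a)" if "y \<in> Y" "y \<notin> Yz" "a \<in> Z" for a y and h :: "real \<Rightarrow> real"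
  proof -
    have "a = z \<Longrightarrow> f z y = 0" using that f z unfolding Yz_def by force
    then show ?thesis using that unfolding g_def t'_def by auto
  qed
  have cZ: "c y \<in> Z" if "y \<in> Yz" for y using c that by blast
  have sumP2: "(\<Sum>a\<in>Z. g a y * h (t' a)) = (\<Sum>a\<in>Z. f a y * h (u a)) + (gz y * h x - f z y * h u0) + (gc y - f (c y) y) * h (cc y)"
    if y: "y \<in> Yz" for y and h :: "real \<Rightarrow> real"
    using P2[OF y, of _ h] fin(1) z cZ[OF y] by (simp add: sum.distrib)
  have gnn: "\<forall>a\<in>Z. \<forall>y\<in>Y. 0 \<le> g a y"
  proof (intro ballI)
    fix a y assume a: "a \<in> Z" and y: "y \<in> Y"
    show "0 \<le> g a y"
    proof (cases "y \<in> Yz")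
      case True
      then show ?thesis unfolding g_def using gz_nn[OF True] gc_nn[OF True] cz[OF True] f a y by auto
    qed (use f a y in \<open>auto simp: g_def\<close>)
  qed
  have t'01: "\<forall>a\<in>Z. 0 \<le> t' a \<and> t' a \<le> 1" using u x unfolding t'_def by auto
  have bal: "\<forall>y\<in>Y. (\<Sum>a\<in>Z. g a y) = (\<Sum>a\<in>Z. f a y) \<and> (\<Sum>a\<in>Z. g a y * t' a) = (\<Sum>a\<in>Z. f a y * u a)"
  proof
    fix y assume y: "y \<in> Y"
    show "(\<Sum>a\<in>Z. g a y) = (\<Sum>a\<in>Z. f a y) \<and> (\<Sum>a\<in>Z. g a y * t' a) = (\<Sum>a\<in>Z. f a y * u a)"
    proof (cases "y \<in> Yz")
      case True
      have A: "(\<Sum>a\<in>Z. g a y) = (\<Sum>a\<in>Z. f a y)"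
        using sumP2[OF True, of "\<lambda>_. 1"] gsum[OF True] unfolding M_def by simp
      have B: "(\<Sum>a\<in>Z. g a y * t' a) = (\<Sum>a\<in>Z. f a y * u a)"
        using sumP2[OF True, of "\<lambda>t. t"] gmom[OF True] by (simp add: algebra_simps)
      show ?thesis using A B by simp
    next
      case False
      have "(\<Sum>a\<in>Z. g a y) = (\<Sum>a\<in>Z. f a y)" by (rule sum.cong) (use P0[OF y False, of _ "\<lambda>_. 1"] in auto)
      moreover have "(\<Sum>a\<in>Z. g a y * t' a) = (\<Sum>a\<in>Z. f a y * u a)" by (rule sum.cong) (use P0[OF y False, of _ "\<lambda>t. t"] in auto)
      ultimately show ?thesis by simp
    qed
  qed
  have "(\<Sum>y\<in>Y. \<Sum>a\<in>Z. f a y * Gf p0 p1 (u a)) \<le> (\<Sum>y\<in>Y. \<Sum>a\<in>Z. g a y * Gf p0 p1 (t' a))"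
    using opt gnn bal t'01 unfolding OPTP_def by blast
  also have "\<dots> = (\<Sum>y\<in>Y. (\<Sum>a\<in>Z. f a y * Gf p0 p1 (u a)) + (if y \<in> Yz then M y * ch p0 p1 (cc y) (mu y) x - M y * ch p0 p1 (cc y) (mu y) u0 else 0))"
  proof (rule sum.cong[OF refl])
    fix y assume y: "y \<in> Y"
    show "(\<Sum>a\<in>Z. g a y * Gf p0 p1 (t' a)) = (\<Sum>a\<in>Z. f a y * Gf p0 p1 (u a)) + (if y \<in> Yz then M y * ch p0 p1 (cc y) (mu y) x - M y * ch p0 p1 (cc y) (mu y) u0 else 0)"
    proof (cases "y \<in> Yz")
      case True
      show ?thesis using sumP2[OF True, of "Gf p0 p1"] chx[OF True] ch0[OF True] True by (simp add: algebra_simps)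
    next
      case False
      show ?thesis using P0[OF y False, of _ "Gf p0 p1"] False by simp
    qed
  qed
  also have "\<dots> = (\<Sum>y\<in>Y. \<Sum>a\<in>Z. f a y * Gf p0 p1 (u a)) + ((\<Sum>y\<in>Yz. M y * ch p0 p1 (cc y) (mu y) x) - (\<Sum>y\<in>Yz. M y * ch p0 p1 (cc y) (mu y) u0))"
    using fin(2) Yz(3) by (simp add: sum.distrib sum.If_cases Int_absorb1 sum_subtractf)
  finally show False using less by linarith
qed



lemma sum_inX: "(\<Sum>x\<in>inX. h x) = h 0 + h (1::nat)" unfolding inX_def by simp

lemma MI_term:
  fixes q c0 c1 p0 p1 :: real
  assumes p: "0 < p0" "0 < p1" and q: "q = p0*c0 + p1*c1" "q > 0" and c: "c0 \<ge> 0" "c1 \<ge> 0"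
  shows "q * Gf p0 p1 (p0*c0/q) = (if p0*c0 = 0 then 0 else p0*c0*ln(c0/q)) + (if p1*c1 = 0 then 0 else p1*c1*ln(c1/q))"
proof -
  have e1: "p0*c0/q/p0 = c0/q" using p by simp
  have e2: "1 - p0*c0/q = p1*c1/q" using q by (simp add: field_simps)
  have e3: "p1*c1/q/p1 = c1/q" using p by simp
  have "q * Gf p0 p1 (p0*c0/q) = q*(p0*c0/q)*ln(c0/q) + q*(p1*c1/q)*ln(c1/q)"
    unfolding Gf_def e1 e2 e3 by (simp add: distrib_left mult.assoc)
  also have "\<dots> = p0*c0*ln(c0/q) + p1*c1*ln(c1/q)" using q by simp
  finally show ?thesis by simp
qed

lemma MI_eq:
  fixes p :: "nat \<Rightarrow> real" and C :: "nat \<Rightarrow> 'a \<Rightarrow> real"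
  assumes p: "p 0 > 0" "p 1 > 0" and C: "is_channel C A" and pos: "\<forall>a\<in>A. outp p C a > 0"
  shows "mutual_info p C A = (\<Sum>a\<in>A. outp p C a * Gf (p 0) (p 1) (post p C a 0))"
proof -
  have "mutual_info p C A = (\<Sum>a\<in>A. \<Sum>x\<in>inX. (if p x * C x a = 0 then 0 else p x * C x a * ln (C x a / outp p C a)))"
    unfolding mutual_info_def by (rule sum.swap)
  also have "\<dots> = (\<Sum>a\<in>A. outp p C a * Gf (p 0) (p 1) (post p C a 0))"
  proof (rule sum.cong[OF refl])
    fix a assume a: "a \<in> A"
    have c: "C 0 a \<ge> 0" "C 1 a \<ge> 0" using C a unfolding is_channel_def inX_def by auto
    have q: "outp p C a = p 0 * C 0 a + p 1 * C 1 a" unfolding outp_def sum_inX by simp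
    show "(\<Sum>x\<in>inX. (if p x * C x a = 0 then 0 else p x * C x a * ln (C x a / outp p C a))) = outp p C a * Gf (p 0) (p 1) (post p C a 0)"
      unfolding sum_inX post_def using MI_term[OF p q pos[rule_format, OF a] c] by simp
  qed
  finally show ?thesis .
qed

lemma CONS:
  fixes p :: "nat \<Rightarrow> real"
    and W :: "nat \<Rightarrow> 'y \<Rightarrow> real" and Y :: "'y set"
    and Q :: "nat \<Rightarrow> 'z \<Rightarrow> real" and Z :: "'z set"
    and L :: nat and t :: "'z \<Rightarrow> real" and g :: "'z \<Rightarrow> 'y \<Rightarrow> real"
  assumes p_pos: "\<forall>x\<in>inX. p x > 0"
    and p_sum: "(\<Sum>x\<in>inX. p x) = 1"
    and W_ch: "is_channel W Y"
    and finZ: "finite Z"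
    and Q_card: "card Z \<le> L"
    and opt: "\<forall>(Z' :: nat set) Q' Phi'. is_channel Q' Z' \<and> card Z' \<le> L \<and>
                 degraded_via W Y Q' Z' Phi' \<longrightarrow>
                 mutual_info p Q Z - mutual_info p W Y \<le> mutual_info p Q' Z' - mutual_info p W Y"
    and t: "\<forall>z\<in>Z. 0 \<le> t z \<and> t z \<le> 1"
    and g: "\<forall>z\<in>Z. \<forall>y\<in>Y. 0 \<le> g z y"
    and bal: "\<forall>y\<in>Y. (\<Sum>z\<in>Z. g z y) = outp p W y \<and> (\<Sum>z\<in>Z. g z y * t z) = p 0 * W 0 y"
  shows "mutual_info p Q Z \<le> (\<Sum>y\<in>Y. \<Sum>z\<in>Z. g z y * Gf (p 0) (p 1) (t z))"
proof -
  have p: "p 0 > 0" "p 1 > 0" using p_pos unfolding inX_def by auto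
  have p1: "p 1 = 1 - p 0" using p_sum unfolding sum_inX by simp
  have finY: "finite Y" using W_ch unfolding is_channel_def by simp
  have Wsum: "(\<Sum>y\<in>Y. W x y) = 1" "\<forall>y\<in>Y. W x y \<ge> 0" if "x \<in> inX" for x
    using W_ch that unfolding is_channel_def by auto
  have W0: "(\<Sum>y\<in>Y. W 0 y) = 1" and W1: "(\<Sum>y\<in>Y. W 1 y) = 1" using Wsum unfolding inX_def by auto
  define m where "m z = (\<Sum>y\<in>Y. g z y)" for z
  have mnn: "m z \<ge> 0" if "z \<in> Z" for z unfolding m_def using g that by (auto intro: sum_nonneg)
  define Zp where "Zp = {z\<in>Z. m z > 0}"
  have Zp: "finite Zp" "Zp \<subseteq> Z" using finZ unfolding Zp_def by auto
  have g0: "g z y = 0" if "z \<in> Z" "z \<notin> Zp" "y \<in> Y" for z y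
  proof -
    have "m z = 0" using mnn[OF that(1)] that unfolding Zp_def by auto
    then show ?thesis using sum_nonneg_eq_0_iff[OF finY, of "g z"] g that unfolding m_def by auto
  qed
  have m0: "m z = 0" if "z \<in> Z" "z \<notin> Zp" for z using mnn[OF that(1)] that unfolding Zp_def by auto
  have red: "(\<Sum>z\<in>Zp. F z) = (\<Sum>z\<in>Z. F z)" if "\<And>z. z \<in> Z \<Longrightarrow> z \<notin> Zp \<Longrightarrow> F z = 0" for F :: "'z \<Rightarrow> real"
    by (rule sum.mono_neutral_left[OF finZ Zp(2)]) (use that in auto)
  have S2: "(\<Sum>z\<in>Z. m z) = 1"
  proof -
    have "(\<Sum>z\<in>Z. m z) = (\<Sum>y\<in>Y. \<Sum>z\<in>Z. g z y)" unfolding m_def by (rule sum.swap)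
    also have "\<dots> = (\<Sum>y\<in>Y. p 0 * W 0 y + p 1 * W 1 y)" using bal unfolding outp_def sum_inX by simp
    also have "\<dots> = p 0 + p 1" using W0 W1 by (simp add: sum.distrib sum_distrib_left[symmetric])
    finally show ?thesis using p1 by simp
  qed
  have S1: "(\<Sum>z\<in>Z. m z * t z) = p 0"
  proof -
    have "(\<Sum>z\<in>Z. m z * t z) = (\<Sum>y\<in>Y. \<Sum>z\<in>Z. g z y * t z)" unfolding m_def sum_distrib_right by (rule sum.swap)
    also have "\<dots> = (\<Sum>y\<in>Y. p 0 * W 0 y)" using bal by simp
    also have "\<dots> = p 0" using W0 by (simp add: sum_distrib_left[symmetric])
    finally show ?thesis .
  qed
  obtain h where h: "bij_betw h {0..<card Zp} Zp" using ex_bij_betw_nat_finite[OF Zp(1)] by blast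
  define Z' where "Z' = {0..<card Zp}"
  have hZ: "h n \<in> Zp" if "n \<in> Z'" for n using h that unfolding Z'_def bij_betw_def by auto
  have ri: "(\<Sum>n\<in>Z'. F (h n)) = (\<Sum>z\<in>Zp. F z)" for F :: "'z \<Rightarrow> real"
    unfolding Z'_def by (rule sum.reindex_bij_betw[OF h])
  have riZ: "(\<Sum>n\<in>Z'. F (h n)) = (\<Sum>z\<in>Z. F z)" if "\<And>z. z \<in> Z \<Longrightarrow> z \<notin> Zp \<Longrightarrow> F z = 0" for F :: "'z \<Rightarrow> real"
    unfolding ri by (rule red) (use that in auto)
  define Q' :: "nat \<Rightarrow> nat \<Rightarrow> real" where "Q' x n = (if x = 0 then m (h n) * t (h n) / p 0 else m (h n) * (1 - t (h n)) / p 1)" for x n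
  define Phi' :: "nat \<Rightarrow> 'y \<Rightarrow> real" where "Phi' n y = g (h n) y / m (h n)" for n y
  have mp: "m (h n) > 0" if "n \<in> Z'" for n using hZ[OF that] unfolding Zp_def by auto
  have hZZ: "h n \<in> Z" if "n \<in> Z'" for n using hZ[OF that] Zp(2) by auto
  have chan: "is_channel Q' Z'"
    unfolding is_channel_def
  proof (intro conjI ballI)
    show "finite Z'" unfolding Z'_def by simp
    fix x assume x: "x \<in> inX"
    fix a assume a: "a \<in> Z'"
    show "0 \<le> Q' x a" using mnn[OF hZZ[OF a]] t hZZ[OF a] p unfolding Q'_def by auto
  next
    fix x assume x: "x \<in> inX"
    show "(\<Sum>a\<in>Z'. Q' x a) = 1"
    proof (cases "x = 0")
      case True
      have "(\<Sum>a\<in>Z'. Q' x a) = (\<Sum>n\<in>Z'. (\<lambda>z. m z * t z / p 0) (h n))" unfolding Q'_def using True by simp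
      also have "\<dots> = (\<Sum>z\<in>Z. m z * t z / p 0)" by (rule riZ) (simp add: m0)
      also have "\<dots> = 1" using S1 p by (simp add: sum_divide_distrib[symmetric])
      finally show ?thesis .
    next
      case False
      have "(\<Sum>a\<in>Z'. Q' x a) = (\<Sum>n\<in>Z'. (\<lambda>z. m z * (1 - t z) / p 1) (h n))" unfolding Q'_def using False by simp
      also have "\<dots> = (\<Sum>z\<in>Z. m z * (1 - t z) / p 1)" by (rule riZ) (simp add: m0)
      also have "\<dots> = ((\<Sum>z\<in>Z. m z) - (\<Sum>z\<in>Z. m z * t z)) / p 1"
        by (simp add: sum_divide_distrib[symmetric] right_diff_distrib sum_subtractf)
      also have "\<dots> = 1" using S1 S2 p p1 by simp
      finally show ?thesis .
    qed
  qed
  have deg': "degraded_via W Y Q' Z' Phi'"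
    unfolding degraded_via_def is_stoch_def
  proof (intro conjI ballI)
    fix n y assume n: "n \<in> Z'" and y: "y \<in> Y"
    show "0 \<le> Phi' n y" unfolding Phi'_def using g hZZ[OF n] y mp[OF n] by simp
  next
    fix n assume n: "n \<in> Z'"
    show "(\<Sum>y\<in>Y. Phi' n y) = 1" unfolding Phi'_def using mp[OF n] by (simp add: sum_divide_distrib[symmetric] m_def)
  next
    fix x y assume x: "x \<in> inX" and y: "y \<in> Y"
    have e: "Q' x n * Phi' n y = (if x = 0 then g (h n) y * t (h n) / p 0 else g (h n) y * (1 - t (h n)) / p 1)" if "n \<in> Z'" for n
      unfolding Q'_def Phi'_def using mp[OF that] by auto
    have "(\<Sum>n\<in>Z'. Q' x n * Phi' n y) = (\<Sum>n\<in>Z'. (\<lambda>z. if x = 0 then g z y * t z / p 0 else g z y * (1 - t z) / p 1) (h n))"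
      using e by simp
    also have "\<dots> = (\<Sum>z\<in>Z. if x = 0 then g z y * t z / p 0 else g z y * (1 - t z) / p 1)"
      by (rule riZ) (simp add: g0 y)
    also have "\<dots> = W x y"
    proof (cases "x = 0")
      case True
      then show ?thesis using bal y p by (simp add: sum_divide_distrib[symmetric])
    next
      case False
      then have x1: "x = 1" using x unfolding inX_def by auto
      have "(\<Sum>z\<in>Z. g z y * (1 - t z) / p 1) = ((\<Sum>z\<in>Z. g z y) - (\<Sum>z\<in>Z. g z y * t z)) / p 1"
        by (simp add: sum_divide_distrib[symmetric] right_diff_distrib sum_subtractf)
      also have "\<dots> = W 1 y" using bal y p unfolding outp_def sum_inX by simp
      finally show ?thesis using x1 by simp
    qed
    finally show "W x y = (\<Sum>n\<in>Z'. Q' x n * Phi' n y)" by simp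
  qed
  have cardZ': "card Z' \<le> L"
  proof -
    have "card Z' = card Zp" unfolding Z'_def by simp
    also have "\<dots> \<le> card Z" by (rule card_mono[OF finZ Zp(2)])
    finally show ?thesis using Q_card by simp
  qed
  have "mutual_info p Q Z \<le> mutual_info p Q' Z'" using opt chan cardZ' deg' by force
  also have "mutual_info p Q' Z' = (\<Sum>n\<in>Z'. outp p Q' n * Gf (p 0) (p 1) (post p Q' n 0))"
  proof (rule MI_eq[OF p chan])
    show "\<forall>a\<in>Z'. 0 < outp p Q' a"
    proof
      fix n assume n: "n \<in> Z'"
      have "outp p Q' n = m (h n)" unfolding outp_def sum_inX Q'_def using p p1 by (simp add: field_simps)
      then show "0 < outp p Q' n" using mp[OF n] by simp
    qed
  qed
  also have "\<dots> = (\<Sum>n\<in>Z'. (\<lambda>z. m z * Gf (p 0) (p 1) (t z)) (h n))"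
  proof (rule sum.cong[OF refl])
    fix n assume n: "n \<in> Z'"
    have o: "outp p Q' n = m (h n)" unfolding outp_def sum_inX Q'_def using p p1 by (simp add: field_simps)
    have "post p Q' n 0 = t (h n)" unfolding post_def o unfolding Q'_def using p mp[OF n] by simp
    then show "outp p Q' n * Gf (p 0) (p 1) (post p Q' n 0) = (\<lambda>z. m z * Gf (p 0) (p 1) (t z)) (h n)" using o by simp
  qed
  also have "\<dots> = (\<Sum>z\<in>Z. m z * Gf (p 0) (p 1) (t z))" by (rule riZ) (simp add: m0)
  also have "\<dots> = (\<Sum>y\<in>Y. \<Sum>z\<in>Z. g z y * Gf (p 0) (p 1) (t z))" unfolding m_def sum_distrib_right by (rule sum.swap)
  finally show ?thesis .
qed

theorem theorem12:
  fixes p :: "nat \<Rightarrow> real"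
    and W :: "nat \<Rightarrow> 'y \<Rightarrow> real" and Y :: "'y set"
    and Q :: "nat \<Rightarrow> 'z \<Rightarrow> real" and Z :: "'z set"
    and Phi :: "'z \<Rightarrow> 'y \<Rightarrow> real"
    and L :: nat
  assumes p_pos: "\<forall>x\<in>inX. p x > 0"
    and p_sum: "(\<Sum>x\<in>inX. p x) = 1"
    and W_ch: "is_channel W Y"
    and W_out_pos: "\<forall>y\<in>Y. outp p W y > 0"
    and L_ge: "L \<ge> 2"
    and Q_ch: "is_channel Q Z"
    and Q_out_pos: "\<forall>z\<in>Z. outp p Q z > 0"
    and Q_card: "card Z \<le> L"
    and deg: "degraded_via W Y Q Z Phi"
    and opt: "\<forall>(Z' :: nat set) Q' Phi'. is_channel Q' Z' \<and> card Z' \<le> L \<and>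
                 degraded_via W Y Q' Z' Phi' \<longrightarrow>
                 mutual_info p Q Z - mutual_info p W Y \<le> mutual_info p Q' Z' - mutual_info p W Y"
    and distinct: "\<forall>z1\<in>Z. \<forall>z2\<in>Z. z1 \<noteq> z2 \<longrightarrow> (\<exists>x\<in>inX. post p Q z1 x \<noteq> post p Q z2 x)"
  shows "(\<forall>z\<in>Z. \<exists>y\<in>Y. \<forall>x\<in>inX. post p Q z x = post p W y x)
       \<and> (\<forall>y\<in>Y. \<forall>z\<in>Z. Phi z y > 0 \<longrightarrow>
            ((post p Q z 0 \<le> post p W y 0 \<and>
                (\<forall>z'\<in>Z. post p Q z' 0 \<le> post p W y 0 \<longrightarrow> post p Q z' 0 \<le> post p Q z 0))
           \<or> (post p Q z 0 \<ge> post p W y 0 \<and>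
                (\<forall>z'\<in>Z. post p Q z' 0 \<ge> post p W y 0 \<longrightarrow> post p Q z' 0 \<ge> post p Q z 0))))"
proof -
  have p: "p 0 > 0" "p 1 > 0" using p_pos unfolding inX_def by auto
  have p1: "p 1 = 1 - p 0" using p_sum unfolding sum_inX by simp
  have finY: "finite Y" using W_ch unfolding is_channel_def by simp
  have finZ: "finite Z" using Q_ch unfolding is_channel_def by simp
  have stoch: "\<forall>z\<in>Z. (\<forall>y\<in>Y. Phi z y \<ge> 0) \<and> (\<Sum>y\<in>Y. Phi z y) = 1" using deg unfolding degraded_via_def is_stoch_def by blast
  have degW: "W x y = (\<Sum>z\<in>Z. Q x z * Phi z y)" if "x \<in> inX" "y \<in> Y" for x y
    using deg that unfolding degraded_via_def by blast
  have Qnn: "Q 0 z \<ge> 0" "Q 1 z \<ge> 0" if "z \<in> Z" for z using Q_ch that unfolding is_channel_def inX_def by auto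
  have Wnn: "W 0 y \<ge> 0" "W 1 y \<ge> 0" if "y \<in> Y" for y using W_ch that unfolding is_channel_def inX_def by auto
  define q where "q z = outp p Q z" for z
  define u where "u z = post p Q z 0" for z
  define w where "w y = outp p W y" for y
  define v where "v y = post p W y 0" for y
  define f where "f z y = q z * Phi z y" for z y
  have qe: "q z = p 0 * Q 0 z + p 1 * Q 1 z" for z unfolding q_def outp_def sum_inX by simp
  have we: "w y = p 0 * W 0 y + p 1 * W 1 y" for y unfolding w_def outp_def sum_inX by simp
  have qp: "q z > 0" if "z \<in> Z" for z using Q_out_pos that unfolding q_def by auto
  have wp: "w y > 0" if "y \<in> Y" for y using W_out_pos that unfolding w_def by auto
  have uq: "q z * u z = p 0 * Q 0 z" if "z \<in> Z" for z unfolding u_def post_def q_def[symmetric] using qp[OF that] by simp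
  have vw: "w y * v y = p 0 * W 0 y" if "y \<in> Y" for y unfolding v_def post_def w_def[symmetric] using wp[OF that] by simp
  have u01: "0 \<le> u z \<and> u z \<le> 1" if "z \<in> Z" for z
  proof -
    have "u z = p 0 * Q 0 z / q z" using uq[OF that] qp[OF that] by (simp add: field_simps)
    moreover have "p 0 * Q 0 z \<le> q z" "0 \<le> p 0 * Q 0 z" "0 \<le> p 1 * Q 1 z" using qe[of z] Qnn[OF that] p by auto
    ultimately show ?thesis using qp[OF that] by (simp add: divide_le_eq_1_pos)
  qed
  have uQ1: "post p Q z 1 = 1 - u z" if "z \<in> Z" for z
    unfolding u_def post_def q_def[symmetric] using qp[OF that] qe[of z] by (simp add: field_simps)
  have vW1: "post p W y 1 = 1 - v y" if "y \<in> Y" for y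
    unfolding v_def post_def w_def[symmetric] using wp[OF that] we[of y] by (simp add: field_simps)
  have fnn: "\<forall>z\<in>Z. \<forall>y\<in>Y. 0 \<le> f z y"
  proof (intro ballI)
    fix z y assume "z \<in> Z" "y \<in> Y"
    then show "0 \<le> f z y" unfolding f_def using stoch qp[of z] by (intro mult_nonneg_nonneg) auto
  qed
  have fsum: "(\<Sum>z\<in>Z. f z y) = w y" if "y \<in> Y" for y
  proof -
    have "(\<Sum>z\<in>Z. f z y) = (\<Sum>z\<in>Z. p 0 * (Q 0 z * Phi z y) + p 1 * (Q 1 z * Phi z y))"
      unfolding f_def qe by (simp add: algebra_simps)
    also have "\<dots> = p 0 * W 0 y + p 1 * W 1 y"
      using degW[of 0 y] degW[of 1 y] that unfolding inX_def by (simp add: sum.distrib sum_distrib_left)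
    finally show ?thesis using we by simp
  qed
  have fmom: "(\<Sum>z\<in>Z. f z y * u z) = w y * v y" if "y \<in> Y" for y
  proof -
    have "(\<Sum>z\<in>Z. f z y * u z) = (\<Sum>z\<in>Z. p 0 * (Q 0 z * Phi z y))"
      by (rule sum.cong[OF refl]) (use uq in \<open>simp add: f_def algebra_simps\<close>)
    also have "\<dots> = p 0 * W 0 y" using degW[of 0 y] that unfolding inX_def by (simp add: sum_distrib_left)
    finally show ?thesis using vw[OF that] by simp
  qed
  have MIQ: "mutual_info p Q Z = (\<Sum>y\<in>Y. \<Sum>z\<in>Z. f z y * Gf (p 0) (p 1) (u z))"
  proof -
    have "mutual_info p Q Z = (\<Sum>z\<in>Z. q z * Gf (p 0) (p 1) (u z))"
      unfolding q_def u_def by (rule MI_eq[OF p Q_ch Q_out_pos])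
    also have "\<dots> = (\<Sum>z\<in>Z. \<Sum>y\<in>Y. f z y * Gf (p 0) (p 1) (u z))"
    proof (rule sum.cong[OF refl])
      fix z assume "z \<in> Z"
      then show "q z * Gf (p 0) (p 1) (u z) = (\<Sum>y\<in>Y. f z y * Gf (p 0) (p 1) (u z))"
        using stoch unfolding f_def by (simp add: sum_distrib_right[symmetric] sum_distrib_left[symmetric])
    qed
    also have "\<dots> = (\<Sum>y\<in>Y. \<Sum>z\<in>Z. f z y * Gf (p 0) (p 1) (u z))" by (rule sum.swap)
    finally show ?thesis .
  qed
  have OPT: "OPTP (p 0) (p 1) Z Y f u"
    unfolding OPTP_def
  proof (intro allI impI)
    fix t g assume t: "\<forall>z\<in>Z. 0 \<le> t z \<and> t z \<le> 1" and g: "\<forall>z\<in>Z. \<forall>y\<in>Y. 0 \<le> g z y"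
      and b: "\<forall>y\<in>Y. (\<Sum>z\<in>Z. g z y) = (\<Sum>z\<in>Z. f z y) \<and> (\<Sum>z\<in>Z. g z y * t z) = (\<Sum>z\<in>Z. f z y * u z)"
    have bal: "\<forall>y\<in>Y. (\<Sum>z\<in>Z. g z y) = outp p W y \<and> (\<Sum>z\<in>Z. g z y * t z) = p 0 * W 0 y"
      using b fsum fmom vw unfolding w_def by auto
    show "(\<Sum>y\<in>Y. \<Sum>z\<in>Z. f z y * Gf (p 0) (p 1) (u z)) \<le> (\<Sum>y\<in>Y. \<Sum>z\<in>Z. g z y * Gf (p 0) (p 1) (t z))"
      using CONS[OF p_pos p_sum W_ch finZ Q_card opt t g bal] MIQ by simp
  qed
  have uZ: "\<forall>z\<in>Z. 0 \<le> u z \<and> u z \<le> 1" using u01 by blast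
  have claim1: "\<forall>z\<in>Z. \<exists>y\<in>Y. \<forall>x\<in>inX. post p Q z x = post p W y x"
  proof
    fix z assume z: "z \<in> Z"
    have "\<exists>y\<in>Y. Phi z y \<noteq> 0"
    proof (rule ccontr)
      assume "\<not> ?thesis"
      then have "(\<Sum>y\<in>Y. Phi z y) = 0" by simp
      then show False using stoch z by simp
    qed
    then obtain y0 where y0: "y0 \<in> Y" "Phi z y0 \<noteq> 0" by blast
    have "Phi z y0 \<ge> 0" using y0 stoch z by blast
    then have "Phi z y0 > 0" using y0 by simp
    then have "f z y0 > 0" using qp[OF z] unfolding f_def by simp
    then have zp: "\<exists>y\<in>Y. f z y > 0" using y0 by blast
    have wp': "\<forall>y\<in>Y. (\<Sum>a\<in>Z. f a y) > 0" using fsum wp by simp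
    obtain y where y: "y \<in> Y" and e: "(\<Sum>a\<in>Z. f a y * u a) = (\<Sum>a\<in>Z. f a y) * u z"
      using CL1[OF p finZ finY uZ fnn OPT z zp wp'] by blast
    have "w y * v y = w y * u z" using e fsum[OF y] fmom[OF y] by simp
    then have vu: "v y = u z" using wp[OF y] by simp
    have "\<forall>x\<in>inX. post p Q z x = post p W y x"
      unfolding inX_def using vu uQ1[OF z] vW1[OF y] unfolding u_def v_def by auto
    then show "\<exists>y\<in>Y. \<forall>x\<in>inX. post p Q z x = post p W y x" using y by blast
  qed
  have claim2: "Phi z y > 0 \<longrightarrow>
            ((u z \<le> v y \<and> (\<forall>z'\<in>Z. u z' \<le> v y \<longrightarrow> u z' \<le> u z))
           \<or> (u z \<ge> v y \<and> (\<forall>z'\<in>Z. u z' \<ge> v y \<longrightarrow> u z' \<ge> u z)))" if y: "y \<in> Y" and z: "z \<in> Z" for y z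
  proof
    assume Phip: "Phi z y > 0"
    have fz: "f z y > 0" using Phip qp[OF z] unfolding f_def by simp
    have fnny: "\<forall>a\<in>Z. 0 \<le> f a y" using fnn y by blast
    have balv: "(\<Sum>a\<in>Z. f a y * u a) = (\<Sum>a\<in>Z. f a y) * v y" using fsum[OF y] fmom[OF y] by simp
    show "(u z \<le> v y \<and> (\<forall>z'\<in>Z. u z' \<le> v y \<longrightarrow> u z' \<le> u z)) \<or> (u z \<ge> v y \<and> (\<forall>z'\<in>Z. u z' \<ge> v y \<longrightarrow> u z' \<ge> u z))"
    proof (cases "u z \<le> v y")
      case True
      have "\<forall>z'\<in>Z. u z' \<le> v y \<longrightarrow> u z' \<le> u z"
      proof (intro ballI impI, rule ccontr)
        fix z' assume z': "z' \<in> Z" "u z' \<le> v y" "\<not> u z' \<le> u z"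
        then have ne: "u z \<noteq> v y" by auto
        obtain a where a: "a \<in> Z" "f a y > 0" "(u a - v y) * (u z - v y) < 0"
          using OFL[OF finZ fnny z fz balv ne] by blast
        have "u z - v y < 0" using True ne by simp
        then have "u a > v y" using a(3) by (simp add: mult_less_0_iff)
        then show False using SF[OF p finZ finY uZ fnn OPT y z z'(1) a(1) fz a(2)] z' by simp
      qed
      then show ?thesis using True by blast
    next
      case False
      have "\<forall>z'\<in>Z. u z' \<ge> v y \<longrightarrow> u z' \<ge> u z"
      proof (intro ballI impI, rule ccontr)
        fix z' assume z': "z' \<in> Z" "u z' \<ge> v y" "\<not> u z' \<ge> u z"
        have ne: "u z \<noteq> v y" using False by auto
        obtain a where a: "a \<in> Z" "f a y > 0" "(u a - v y) * (u z - v y) < 0"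
          using OFL[OF finZ fnny z fz balv ne] by blast
        have "u z - v y > 0" using False by simp
        then have "u a < v y" using a(3) by (simp add: mult_less_0_iff)
        then show False using SF[OF p finZ finY uZ fnn OPT y a(1) z'(1) z a(2) fz] z' by simp
      qed
      then show ?thesis using False by auto
    qed
  qed
  show ?thesis using claim1 claim2 unfolding u_def v_def by blast
qed

end
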